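(* Let $G$ be a finite group acting (faithfully) on a finite set $M$ via $\circ$, and let $\mathcal H$ be a family of subgroups of $G$. Suppose $f:M\to S$ hides some $H\in\mathcal H$ by symmetries, i.e. $f(x)=f(y)\iff H\circ x=H\circ y$ for all $x,y\in M$. Let $B=\{m_1,\dots,m_t\}\subseteq M$ be an $\mathcal H$-strong base. Then the function $f_{\rm HSP}:G\to S^t$, $f_{\rm HSP}(g)=(f(g\circ m_1),\dots,f(g\circ m_t))$, hides $H$ in the sense of the hidden subgroup problem: for all $x,y\in G$, $f_{\rm HSP}(x)=f_{\rm HSP}(y)\iff Hx=Hy$.
   Context: For $m\in M$, $G_m=\{g\in G: g\circ m=m\}$ is the stabilizer of $m$. For $H\le G$, a set $B\subseteq M$ is an $H$-strong base if for every $g\in G$, $\bigcap_{m\in B} H\,G_{g\circ m}=H$ (here $HG_{m}=\{hk:h\in H,k\in G_m\}$). $B$ is an $\mathcal H$-strong base if it is an $H$-strong base for every $H\in\mathcal H$. *)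

theory Defs
  imports "HOL-Algebra.Group_Action"
begin

definition strong_base :: "('g, 'c) monoid_scheme \<Rightarrow> ('g \<Rightarrow> 'm \<Rightarrow> 'm) \<Rightarrow> 'g set \<Rightarrow> 'm set \<Rightarrow> bool" where
  "strong_base G \<phi> H B \<longleftrightarrow>
     (\<forall>g \<in> carrier G. (\<Inter>m \<in> B. H <#>\<^bsub>G\<^esub> stabilizer G \<phi> (\<phi> g m)) = H)"

definition family_strong_base :: "('g, 'c) monoid_scheme \<Rightarrow> ('g \<Rightarrow> 'm \<Rightarrow> 'm) \<Rightarrow> 'g set set \<Rightarrow> 'm set \<Rightarrow> bool" where
  "family_strong_base G \<phi> \<H> B \<longleftrightarrow> (\<forall>H \<in> \<H>. strong_base G \<phi> H B)"

definition hides_by_symmetries :: "('g, 'c) monoid_scheme \<Rightarrow> 'm set \<Rightarrow> ('g \<Rightarrow> 'm \<Rightarrow> 'm) \<Rightarrow> 'g set \<Rightarrow> ('m \<Rightarrow> 's) \<Rightarrow> bool" where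
  "hides_by_symmetries G M \<phi> H f \<longleftrightarrow>
     (\<forall>x \<in> M. \<forall>y \<in> M. f x = f y \<longleftrightarrow> (\<lambda>h. \<phi> h x) ` H = (\<lambda>h. \<phi> h y) ` H)"

end

theory Submission
  imports Defs
begin

theorem lemma1:
  fixes G :: "('g, 'c) monoid_scheme" and M :: "'m set" and \<phi> :: "'g \<Rightarrow> 'm \<Rightarrow> 'm"
    and \<H> :: "'g set set" and H :: "'g set" and f :: "'m \<Rightarrow> 's" and ms :: "'m list"
  assumes "group G" and "finite (carrier G)" and "finite M"
    and "faithful_action G M \<phi>"
    and "\<forall>K \<in> \<H>. subgroup K G"
    and "H \<in> \<H>"
    and "hides_by_symmetries G M \<phi> H f"
    and "distinct ms" and "set ms \<subseteq> M"
    and "family_strong_base G \<phi> \<H> (set ms)"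
  shows "\<forall>x \<in> carrier G. \<forall>y \<in> carrier G.
           map (\<lambda>m. f (\<phi> x m)) ms = map (\<lambda>m. f (\<phi> y m)) ms \<longleftrightarrow> H #>\<^bsub>G\<^esub> x = H #>\<^bsub>G\<^esub> y"
proof (intro ballI)
  fix x y assume x: "x \<in> carrier G" and y: "y \<in> carrier G"
  interpret group G by fact
  interpret ga: group_action G M \<phi> using assms(4) faithful_action.axioms(1) by blast
  have one_act: "\<And>z. z \<in> M \<Longrightarrow> \<phi> \<one>\<^bsub>G\<^esub> z = z"
    using ga.id_eq_one by (metis restrict_apply')
  have sg: "subgroup H G" using assms(5,6) by blast
  have Hc: "H \<subseteq> carrier G" using sg subgroup.subset by blast
  have sb: "strong_base G \<phi> H (set ms)" using assms(10,6) unfolding family_strong_base_def by blast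
  have hid: "\<And>a b. a \<in> M \<Longrightarrow> b \<in> M \<Longrightarrow> f a = f b \<longleftrightarrow> (\<lambda>h. \<phi> h a) ` H = (\<lambda>h. \<phi> h b) ` H"
    using assms(7) unfolding hides_by_symmetries_def by blast
  have coset: "H #>\<^bsub>G\<^esub> x = H #>\<^bsub>G\<^esub> y \<longleftrightarrow> (\<exists>h\<in>H. y = h \<otimes>\<^bsub>G\<^esub> x)"
  proof
    assume "H #>\<^bsub>G\<^esub> x = H #>\<^bsub>G\<^esub> y"
    then have "y \<in> H #>\<^bsub>G\<^esub> x" using repr_independenceD[OF sg y] by simp
    then show "\<exists>h\<in>H. y = h \<otimes>\<^bsub>G\<^esub> x" unfolding r_coset_def by blast
  next
    assume "\<exists>h\<in>H. y = h \<otimes>\<^bsub>G\<^esub> x"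
    then have "y \<in> H #>\<^bsub>G\<^esub> x" unfolding r_coset_def by blast
    then show "H #>\<^bsub>G\<^esub> x = H #>\<^bsub>G\<^esub> y" using repr_independence[OF _ x sg] by simp
  qed
  have eqmap: "map (\<lambda>m. f (\<phi> x m)) ms = map (\<lambda>m. f (\<phi> y m)) ms \<longleftrightarrow>
     (\<forall>m\<in>set ms. (\<lambda>h. \<phi> h (\<phi> x m)) ` H = (\<lambda>h. \<phi> h (\<phi> y m)) ` H)"
  proof -
    have "map (\<lambda>m. f (\<phi> x m)) ms = map (\<lambda>m. f (\<phi> y m)) ms \<longleftrightarrow> (\<forall>m\<in>set ms. f (\<phi> x m) = f (\<phi> y m))"
      by (simp add: map_eq_conv)
    also have "\<dots> \<longleftrightarrow> (\<forall>m\<in>set ms. (\<lambda>h. \<phi> h (\<phi> x m)) ` H = (\<lambda>h. \<phi> h (\<phi> y m)) ` H)"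
    proof (rule ball_cong[OF refl])
      fix m assume "m \<in> set ms"
      then have mM: "m \<in> M" using assms(9) by blast
      show "f (\<phi> x m) = f (\<phi> y m) \<longleftrightarrow> (\<lambda>h. \<phi> h (\<phi> x m)) ` H = (\<lambda>h. \<phi> h (\<phi> y m)) ` H"
        by (rule hid) (use ga.element_image[OF x mM refl] ga.element_image[OF y mM refl] in auto)
    qed
    finally show ?thesis .
  qed
  show "map (\<lambda>m. f (\<phi> x m)) ms = map (\<lambda>m. f (\<phi> y m)) ms \<longleftrightarrow> H #>\<^bsub>G\<^esub> x = H #>\<^bsub>G\<^esub> y"
    unfolding eqmap coset
  proof
    assume A: "\<forall>m\<in>set ms. (\<lambda>h. \<phi> h (\<phi> x m)) ` H = (\<lambda>h. \<phi> h (\<phi> y m)) ` H"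
    define k where "k = y \<otimes>\<^bsub>G\<^esub> inv\<^bsub>G\<^esub> x"
    have kc: "k \<in> carrier G" using x y k_def by simp
    have "k \<in> (\<Inter>m \<in> set ms. H <#>\<^bsub>G\<^esub> stabilizer G \<phi> (\<phi> x m))"
    proof
      fix m assume m: "m \<in> set ms"
      have mM: "m \<in> M" using m assms(9) by blast
      have xm: "\<phi> x m \<in> M" using ga.element_image x mM by blast
      have Am: "(\<lambda>h. \<phi> h (\<phi> x m)) ` H = (\<lambda>h. \<phi> h (\<phi> y m)) ` H"
        using A m by (rule bspec)
      have "\<phi> \<one>\<^bsub>G\<^esub> (\<phi> y m) \<in> (\<lambda>h. \<phi> h (\<phi> y m)) ` H"
        using subgroup.one_closed[OF sg] by (rule imageI)
      moreover have "\<phi> \<one>\<^bsub>G\<^esub> (\<phi> y m) = \<phi> y m"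
        using one_act ga.element_image[OF y mM refl] by simp
      ultimately have "\<phi> y m \<in> (\<lambda>h. \<phi> h (\<phi> x m)) ` H" unfolding Am by simp
      then obtain h where h: "h \<in> H" "\<phi> y m = \<phi> h (\<phi> x m)"
        by (rule imageE)
      have hc: "h \<in> carrier G" using h Hc by blast
      have "\<phi> (inv\<^bsub>G\<^esub> h \<otimes>\<^bsub>G\<^esub> k) (\<phi> x m) = \<phi> (inv\<^bsub>G\<^esub> h) (\<phi> k (\<phi> x m))"
        using ga.composition_rule[OF xm _ kc] hc by simp
      also have "\<phi> k (\<phi> x m) = \<phi> y (\<phi> (inv\<^bsub>G\<^esub> x) (\<phi> x m))"
        using ga.composition_rule[OF xm y] x k_def by simp
      also have "\<phi> (inv\<^bsub>G\<^esub> x) (\<phi> x m) = m"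
        using ga.composition_rule[OF mM inv_closed[OF x] x] x l_inv[OF x] one_act[OF mM] by metis
      also have "\<phi> (inv\<^bsub>G\<^esub> h) (\<phi> y m) = \<phi> (inv\<^bsub>G\<^esub> h) (\<phi> h (\<phi> x m))" using h(2) by (rule arg_cong)
      also have "\<dots> = \<phi> (inv\<^bsub>G\<^esub> h \<otimes>\<^bsub>G\<^esub> h) (\<phi> x m)"
        using ga.composition_rule[OF xm inv_closed[OF hc] hc] by simp
      also have "\<dots> = \<phi> x m"
        using hc l_inv[OF hc] one_act[OF xm] by metis
      finally have "inv\<^bsub>G\<^esub> h \<otimes>\<^bsub>G\<^esub> k \<in> stabilizer G \<phi> (\<phi> x m)"
        unfolding stabilizer_def using hc kc by simp
      moreover have "k = h \<otimes>\<^bsub>G\<^esub> (inv\<^bsub>G\<^esub> h \<otimes>\<^bsub>G\<^esub> k)"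
        using hc kc by (simp add: m_assoc[symmetric])
      ultimately show "k \<in> H <#>\<^bsub>G\<^esub> stabilizer G \<phi> (\<phi> x m)"
        unfolding set_mult_def using h(1) by blast
    qed
    then have kH: "k \<in> H" using sb x unfolding strong_base_def by blast
    have "y = k \<otimes>\<^bsub>G\<^esub> x" using x y k_def by (simp add: m_assoc)
    then show "\<exists>h\<in>H. y = h \<otimes>\<^bsub>G\<^esub> x" using kH by blast
  next
    assume "\<exists>h\<in>H. y = h \<otimes>\<^bsub>G\<^esub> x"
    then obtain h where h: "h \<in> H" "y = h \<otimes>\<^bsub>G\<^esub> x" by blast
    have hc: "h \<in> carrier G" using h Hc by blast
    show "\<forall>m\<in>set ms. (\<lambda>h. \<phi> h (\<phi> x m)) ` H = (\<lambda>h. \<phi> h (\<phi> y m)) ` H"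
    proof
      fix m assume m: "m \<in> set ms"
      have mM: "m \<in> M" using m assms(9) by blast
      have xm: "\<phi> x m \<in> M" using ga.element_image x mM by blast
      have ym: "\<And>h'. h' \<in> H \<Longrightarrow> \<phi> h' (\<phi> y m) = \<phi> (h' \<otimes>\<^bsub>G\<^esub> h) (\<phi> x m)"
      proof -
        fix h' assume h': "h' \<in> H"
        have h'c: "h' \<in> carrier G" using h' Hc by blast
        have "\<phi> h' (\<phi> y m) = \<phi> h' (\<phi> h (\<phi> x m))"
          using h(2) ga.composition_rule[OF mM hc x] by simp
        also have "\<dots> = \<phi> (h' \<otimes>\<^bsub>G\<^esub> h) (\<phi> x m)"
          using ga.composition_rule[OF xm h'c hc] by simp
        finally show "\<phi> h' (\<phi> y m) = \<phi> (h' \<otimes>\<^bsub>G\<^esub> h) (\<phi> x m)" .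
      qed
      have img: "(\<lambda>h'. h' \<otimes>\<^bsub>G\<^esub> h) ` H = H" using coset_join2[OF hc sg h(1)]
        unfolding r_coset_def by auto
      have "(\<lambda>h'. \<phi> h' (\<phi> y m)) ` H = (\<lambda>k. \<phi> k (\<phi> x m)) ` ((\<lambda>h'. h' \<otimes>\<^bsub>G\<^esub> h) ` H)"
        using ym by (auto simp: image_iff)
      then show "(\<lambda>h. \<phi> h (\<phi> x m)) ` H = (\<lambda>h. \<phi> h (\<phi> y m)) ` H" using img by simp
    qed
  qed
qed

end
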